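(* Let $f:\mathbb{R}^n\to\mathbb{R}$ be continuously differentiable and bounded below with $\nabla f$ Lipschitz continuous with constant $L(f)$, let $s$ be an integer with $0<s<n$, and let $\{\mathbf{x}^k\}_{k\ge0}$ be a sequence generated by the IHT method with constant $L>L(f)$. Then the sequence $\{f(\mathbf{x}^k)\}_{k\ge0}$ converges.
   Context: $C_s=\{\mathbf{x}\in\mathbb{R}^n:\|\mathbf{x}\|_0\le s\}$ where $\|\mathbf{x}\|_0$ is the number of nonzero components. $P_{C_s}(\mathbf{y})=\operatorname{argmin}_{\mathbf{x}\in C_s}\|\mathbf{x}-\mathbf{y}\|^2$ (possibly multi-valued). The IHT method with constant $L$: choose $\mathbf{x}^0\in C_s$ and for $k=0,1,2,\dots$ pick any $\mathbf{x}^{k+1}\in P_{C_s}\!\left(\mathbf{x}^k-\frac1L\nabla f(\mathbf{x}^k)\right)$. "$\nabla f$ Lipschitz with constant $L(f)$" means $\|\nabla f(\mathbf{x})-\nabla f(\mathbf{y})\|\le L(f)\|\mathbf{x}-\mathbf{y}\|$ for all $\mathbf{x},\mathbf{y}$. *)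

theory Defs
  imports "HOL-Analysis.Analysis"
begin

definition l0norm :: "real ^ 'n \<Rightarrow> nat" where
  "l0norm x = card {i. x $ i \<noteq> 0}"

definition Cs :: "nat \<Rightarrow> (real ^ 'n) set" where
  "Cs s = {x. l0norm x \<le> s}"

definition PCs :: "nat \<Rightarrow> real ^ 'n \<Rightarrow> (real ^ 'n) set" where
  "PCs s y = {x \<in> Cs s. \<forall>z \<in> Cs s. (norm (x - y))\<^sup>2 \<le> (norm (z - y))\<^sup>2}"

definition IHT_seq :: "nat \<Rightarrow> real \<Rightarrow> (real ^ 'n \<Rightarrow> real ^ 'n) \<Rightarrow> (nat \<Rightarrow> real ^ 'n) \<Rightarrow> bool" where
  "IHT_seq s L grad x \<longleftrightarrow> x 0 \<in> Cs s \<and>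
     (\<forall>k. x (Suc k) \<in> PCs s (x k - (1 / L) *\<^sub>R grad (x k)))"

end

theory Submission
  imports Defs
begin

lemma descent:
  fixes f :: "real ^ 'n \<Rightarrow> real" and grad :: "real ^ 'n \<Rightarrow> real ^ 'n"
  assumes deriv: "\<And>y. (f has_derivative (\<lambda>h. grad y \<bullet> h)) (at y)"
    and lip: "\<And>y z. norm (grad y - grad z) \<le> Lf * norm (y - z)"
  shows "f y \<le> f x + grad x \<bullet> (y - x) + Lf / 2 * (norm (y - x))\<^sup>2"
proof -
  define d where "d = y - x"
  define \<phi> where "\<phi> t = f (x + t *\<^sub>R d) - t * (grad x \<bullet> d) - Lf / 2 * t^2 * (norm d)\<^sup>2" for t
  have D: "DERIV \<phi> t :> (grad (x + t *\<^sub>R d) \<bullet> d - grad x \<bullet> d - Lf * t * (norm d)\<^sup>2)" for t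
  proof -
    have a: "((\<lambda>t. x + t *\<^sub>R d) has_derivative (\<lambda>h. h *\<^sub>R d)) (at t)"
      by (auto intro!: derivative_eq_intros)
    have b: "((\<lambda>t. f (x + t *\<^sub>R d)) has_derivative (\<lambda>h. grad (x + t *\<^sub>R d) \<bullet> (h *\<^sub>R d))) (at t)"
      using has_derivative_compose[OF a deriv] by simp
    have c: "DERIV (\<lambda>t. f (x + t *\<^sub>R d)) t :> grad (x + t *\<^sub>R d) \<bullet> d"
      unfolding has_field_derivative_def using b by (simp add: mult.commute[of _ "grad _ \<bullet> d"])
    show ?thesis unfolding \<phi>_def
      by (rule derivative_eq_intros c refl | simp)+
  qed
  have "\<phi> 1 \<le> \<phi> 0"
  proof (rule DERIV_nonpos_imp_nonincreasing[of 0 1 \<phi>])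
    fix t :: real assume t: "0 \<le> t" "t \<le> 1"
    have "grad (x + t *\<^sub>R d) \<bullet> d - grad x \<bullet> d = (grad (x + t *\<^sub>R d) - grad x) \<bullet> d"
      by (simp add: inner_diff_left)
    also have "\<dots> \<le> norm (grad (x + t *\<^sub>R d) - grad x) * norm d"
      by (rule Cauchy_Schwarz_ineq2[THEN order_trans[OF abs_ge_self]])
    also have "\<dots> \<le> Lf * norm (t *\<^sub>R d) * norm d"
      using lip[of "x + t *\<^sub>R d" x] by (intro mult_right_mono) auto
    also have "\<dots> = Lf * t * (norm d)\<^sup>2" using t by (simp add: power2_eq_square)
    finally show "\<exists>y. DERIV \<phi> t :> y \<and> y \<le> 0" using D by fastforce
  qed auto
  thus ?thesis unfolding \<phi>_def d_def by simp
qed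

theorem corollary3p1:
  fixes f :: "real ^ 'n \<Rightarrow> real"
    and grad :: "real ^ 'n \<Rightarrow> real ^ 'n"
    and Lf L :: real and s :: nat
    and x :: "nat \<Rightarrow> real ^ 'n"
  assumes deriv: "\<And>y. (f has_derivative (\<lambda>h. grad y \<bullet> h)) (at y)"
    and cont_grad: "continuous_on UNIV grad"
    and bdd: "bdd_below (range f)"
    and lip: "\<And>y z. norm (grad y - grad z) \<le> Lf * norm (y - z)"
    and s_pos: "0 < s" and s_lt: "s < CARD('n)"
    and L_gt: "L > Lf"
    and iht: "IHT_seq s L grad x"
  shows "convergent (\<lambda>k. f (x k))"
proof -
  have Lf0: "0 \<le> Lf"
  proof -
    have "0 \<le> Lf * norm (1 - (0::real^'n))" using lip[of 1 0] norm_ge_zero order_trans by blast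
    moreover have "norm (1 - (0::real^'n)) > 0" by simp
    ultimately show ?thesis by (simp add: zero_le_mult_iff)
  qed
  hence L0: "L > 0" using L_gt by linarith
  have xin: "x k \<in> Cs s" for k
    using iht unfolding IHT_seq_def PCs_def by (cases k) auto
  have dec: "f (x (Suc k)) \<le> f (x k)" for k
  proof -
    define g where "g = grad (x k)"
    define d where "d = x (Suc k) - x k"
    have "(norm (x (Suc k) - (x k - (1/L) *\<^sub>R g)))\<^sup>2 \<le> (norm (x k - (x k - (1/L) *\<^sub>R g)))\<^sup>2"
      using iht xin[of k] unfolding IHT_seq_def PCs_def g_def by blast
    hence "(norm (d + (1/L) *\<^sub>R g))\<^sup>2 \<le> (norm ((1/L) *\<^sub>R g))\<^sup>2"
      unfolding d_def by (simp add: algebra_simps)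
    hence "d \<bullet> d + 2 * (1/L) * (g \<bullet> d) + (1/L)^2 * (g \<bullet> g) \<le> (1/L)^2 * (g \<bullet> g)"
      unfolding power2_norm_eq_inner by (simp add: inner_add_left inner_add_right inner_commute algebra_simps power2_eq_square)
    hence "(norm d)\<^sup>2 + 2 * (1/L) * (g \<bullet> d) \<le> 0"
      by (simp add: power2_norm_eq_inner)
    hence gd: "g \<bullet> d \<le> - L / 2 * (norm d)\<^sup>2" using L0
      by (simp add: field_simps)
    have "f (x (Suc k)) \<le> f (x k) + g \<bullet> d + Lf / 2 * (norm d)\<^sup>2"
      using descent[OF deriv lip, of "x (Suc k)" "x k"] unfolding g_def d_def .
    also have "\<dots> \<le> f (x k) + (Lf - L) / 2 * (norm d)\<^sup>2" using gd by (simp add: field_simps)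
    also have "\<dots> \<le> f (x k)" using L_gt by (simp add: mult_nonpos_nonneg)
    finally show ?thesis .
  qed
  have "decseq (\<lambda>k. f (x k))" by (rule decseq_SucI) (use dec in auto)
  moreover obtain m where "\<And>k. m \<le> f (x k)" using bdd unfolding bdd_below_def by auto
  ultimately show ?thesis
    by (metis decseq_convergent convergent_def)
qed

end
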